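(* Let $n>d$, let $\mathcal{M}=(M_\sigma)$ be a linkage $(n,d)$-matching field on $L\sqcup R$ and fix $\ell_j\in L$. Then the set $\{\Omega_\rho^{(j)} : \rho\in\binom{L}{n-d+1},\ \ell_j\in\rho\}$, where $\Omega^{(j)}_\rho$ denotes the restriction (induced subgraph) of the Chow covector $\Omega_\rho$ to $(L\setminus\{\ell_j\})\sqcup R$, is the set of Chow covectors of the induced submatching field $(M_\sigma)_{\sigma\subseteq L\setminus\{\ell_j\}}$ on $(L\setminus\{\ell_j\})\sqcup R$.
   Context: $L=\{\ell_1,\dots,\ell_n\}$, $R=\{r_1,\dots,r_d\}$; graphs bipartite, identified with edge sets. A matching field on $L'\sqcup R$ ($|L'|\ge d$) assigns to each $d$-subset $\sigma\subseteq L'$ a perfect matching $M_\sigma$ between $\sigma$ and $R$; it is linkage if for every $r_i\in R$ and every $(d+1)$-subset $\tau\subseteq L'$ there exist distinct $\ell,\ell'\in\tau$ with $M_{\tau\setminus\{\ell\}}$ and $M_{\tau\setminus\{\ell'\}}$ agreeing except on edges incident with $r_i$. For a matching field on $L'\sqcup R$ and a $(|L'|-d+1)$-subset $\rho\subseteq L'$, the Chow covector $\Omega_\rho$ is the graph with edges $(\ell,r)$ for $\ell\in\rho$, where $r$ is matched to $\ell$ in $M_{(L'\setminus\rho)\cup\{\ell\}}$. *)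

theory Defs
  imports Main
begin

type_synonym ('a, 'b) bgraph = "('a \<times> 'b) set"

definition perfect_matching :: "('a, 'b) bgraph \<Rightarrow> 'a set \<Rightarrow> 'b set \<Rightarrow> bool" where
  "perfect_matching G S R \<longleftrightarrow> G \<subseteq> S \<times> R \<and>
     (\<forall>l\<in>S. \<exists>!r. (l, r) \<in> G) \<and> (\<forall>r\<in>R. \<exists>!l. (l, r) \<in> G)"

text \<open>A matching field on L' and R (with d = card R): each d-subset of L'
  is assigned a perfect matching with R. Values on other sets are irrelevant.\<close>
definition matching_field :: "('a set \<Rightarrow> ('a, 'b) bgraph) \<Rightarrow> 'a set \<Rightarrow> 'b set \<Rightarrow> bool" where
  "matching_field M L' R \<longleftrightarrow> card R \<le> card L' \<and>
     (\<forall>\<sigma>. \<sigma> \<subseteq> L' \<and> card \<sigma> = card R \<longrightarrow> perfect_matching (M \<sigma>) \<sigma> R)"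

definition linkage :: "('a set \<Rightarrow> ('a, 'b) bgraph) \<Rightarrow> 'a set \<Rightarrow> 'b set \<Rightarrow> bool" where
  "linkage M L' R \<longleftrightarrow> matching_field M L' R \<and>
     (\<forall>r\<in>R. \<forall>\<tau>. \<tau> \<subseteq> L' \<and> card \<tau> = card R + 1 \<longrightarrow>
        (\<exists>l\<in>\<tau>. \<exists>l'\<in>\<tau>. l \<noteq> l' \<and>
           {e \<in> M (\<tau> - {l}). snd e \<noteq> r} = {e \<in> M (\<tau> - {l'}). snd e \<noteq> r}))"

definition chow_covector :: "('a set \<Rightarrow> ('a, 'b) bgraph) \<Rightarrow> 'a set \<Rightarrow> 'a set \<Rightarrow> ('a, 'b) bgraph" where
  "chow_covector M L' \<rho> = {(l, r). l \<in> \<rho> \<and> (l, r) \<in> M ((L' - \<rho>) \<union> {l})}"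

definition chow_covectors :: "('a set \<Rightarrow> ('a, 'b) bgraph) \<Rightarrow> 'a set \<Rightarrow> 'b set \<Rightarrow> ('a, 'b) bgraph set" where
  "chow_covectors M L' R = {chow_covector M L' \<rho> | \<rho>. \<rho> \<subseteq> L' \<and> card \<rho> = card L' - card R + 1}"

definition delete_left :: "('a, 'b) bgraph \<Rightarrow> 'a \<Rightarrow> ('a, 'b) bgraph" where
  "delete_left G lj = {e \<in> G. fst e \<noteq> lj}"

end

theory Submission
  imports Defs
begin

lemma key:
  assumes "lj \<in> \<rho>" "\<rho> \<subseteq> L"
  shows "delete_left (chow_covector M L \<rho>) lj = chow_covector M (L - {lj}) (\<rho> - {lj})"
proof -
  have e: "L - {lj} - (\<rho> - {lj}) = L - \<rho>" using assms by blast
  show ?thesis unfolding delete_left_def chow_covector_def e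
  proof (rule set_eqI)
    fix x :: "'a \<times> 'b"
    obtain a b where x: "x = (a, b)" by (cases x)
    show "x \<in> {e \<in> {(l, r). l \<in> \<rho> \<and> (l, r) \<in> M (L - \<rho> \<union> {l})}. fst e \<noteq> lj} \<longleftrightarrow>
          x \<in> {(l, r). l \<in> \<rho> - {lj} \<and> (l, r) \<in> M (L - \<rho> \<union> {l})}"
      unfolding x by (simp add: conj_comms)
  qed
qed

theorem lemma3p26:
  fixes M :: "'a set \<Rightarrow> ('a \<times> 'b) set" and L :: "'a set" and R :: "'b set"
    and n d :: nat and lj :: 'a
  assumes "finite L" and "finite R"
    and "card L = n" and "card R = d" and "n > d"
    and "linkage M L R"
    and "lj \<in> L"
  shows "{delete_left (chow_covector M L \<rho>) lj | \<rho>. \<rho> \<subseteq> L \<and> card \<rho> = n - d + 1 \<and> lj \<in> \<rho>}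
         = chow_covectors M (L - {lj}) R"
proof -
  have cL: "card (L - {lj}) = n - 1" using assms by simp
  show ?thesis
  proof (rule set_eqI, rule iffI)
    fix x assume "x \<in> {delete_left (chow_covector M L \<rho>) lj | \<rho>. \<rho> \<subseteq> L \<and> card \<rho> = n - d + 1 \<and> lj \<in> \<rho>}"
    then obtain \<rho> where r: "x = delete_left (chow_covector M L \<rho>) lj" "\<rho> \<subseteq> L" "card \<rho> = n - d + 1" "lj \<in> \<rho>" by blast
    have fin: "finite \<rho>" using r(2) assms(1) finite_subset by blast
    have c1: "card (\<rho> - {lj}) = n - d" using r fin by simp
    have s1: "\<rho> - {lj} \<subseteq> L - {lj}" using r by blast
    show "x \<in> chow_covectors M (L - {lj}) R"
    proof -
      have "card (\<rho> - {lj}) = card (L - {lj}) - card R + 1" using c1 cL assms(4,5) by simp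
      then have "\<exists>\<rho>'. x = chow_covector M (L - {lj}) \<rho>' \<and> \<rho>' \<subseteq> L - {lj} \<and> card \<rho>' = card (L - {lj}) - card R + 1"
        using key[OF r(4) r(2)] r(1) \<open>\<rho> - {lj} \<subseteq> L - {lj}\<close> by blast
      then show ?thesis unfolding chow_covectors_def by blast
    qed
  next
    fix x assume "x \<in> chow_covectors M (L - {lj}) R"
    then obtain \<rho>' where r: "x = chow_covector M (L - {lj}) \<rho>'" "\<rho>' \<subseteq> L - {lj}"
       "card \<rho>' = card (L - {lj}) - card R + 1" unfolding chow_covectors_def by blast
    define \<rho> where "\<rho> = insert lj \<rho>'"
    have fin: "finite \<rho>'" using r(2) assms(1) finite_subset by blast
    have c: "card \<rho>' = n - d" using r(3) cL assms(4,5) by simp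
    have "lj \<notin> \<rho>'" using r(2) by blast
    hence f1: "card \<rho> = n - d + 1" using fin c \<rho>_def by simp
    have f2: "\<rho> \<subseteq> L" "lj \<in> \<rho>" using r(2) assms(7) \<rho>_def by auto
    have f3: "\<rho> - {lj} = \<rho>'" using \<open>lj \<notin> \<rho>'\<close> \<rho>_def by auto
    show "x \<in> {delete_left (chow_covector M L \<rho>) lj | \<rho>. \<rho> \<subseteq> L \<and> card \<rho> = n - d + 1 \<and> lj \<in> \<rho>}"
    proof -
      have "x = delete_left (chow_covector M L \<rho>) lj" using key[of lj \<rho> L M] r(1) f2 f3 by simp
      then show ?thesis using f1 f2 by blast
    qed
  qed
qed

end
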